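(* There exists $N_0=N_0(\lambda)\ge1$ such that for all $N\ge N_0$, all $\theta\in\mathcal{M}(\mathbb{R}^{d})$ with $\mathrm{diam}(\mathrm{supp}(\theta))\le1/3$, and all $n\ge N$, \[ H\Big(\theta;\frac{s_{n+N}}{s_{n+2N}}\mid\frac{s_{n}}{s_{n+2N}}\Big)\ge2H\Big(\theta;\frac{s_{n}}{s_{n+2N}}\mid\frac{s_{n-N}}{s_{n+2N}}\Big). \]
   Context: Fix $d\ge1$ and $\lambda=(\lambda_1,\dots,\lambda_d)\in(0,1)^d$ with $\lambda_1>\dots>\lambda_d$; logs are base 2. $\mathcal{M}(\mathbb{R}^d)$: compactly supported Borel probability measures. Sequence $s_n=(s_{n,1},\dots,s_{n,d})\in\mathbb{R}^d_{>0}$: for each $j$, $s_{0,j}=1$ and $s_{n+1,j}=s_{n,j}/b_{n+1,j}$, where $b_{n+1,j}$ is the unique positive integer with $s_{n,j}/b_{n+1,j}\ge\lambda_j^{n+1}>s_{n,j}/(1+b_{n+1,j})$. For $r,r'\in\mathbb{R}^d_{>0}$, $r/r'$ denotes coordinatewise division. Average entropy: for $\mu$ the law of bounded $X$ and $r\in\mathbb{R}^d_{>0}$, $H(\mu;r):=\int_{[0,1)^d}H(\lfloor X/r+x\rfloor)dx$ (coordinatewise division and floor, Shannon entropy), and $H(\mu;r\mid r'):=H(\mu;r)-H(\mu;r')$. *)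

theory Defs
  imports "HOL-Probability.Probability"
begin

definition vdiv :: "real^'n \<Rightarrow> real^'n \<Rightarrow> real^'n" where
  "vdiv r r' = (\<chi> i. r $ i / r' $ i)"

primrec s_seq :: "real^'n \<Rightarrow> nat \<Rightarrow> real^'n" where
  "s_seq lam 0 = (\<chi> j. 1)"
| "s_seq lam (Suc n) = (\<chi> j. s_seq lam n $ j /
     real (THE b::nat. 0 < b \<and> s_seq lam n $ j / real b \<ge> (lam $ j) ^ (Suc n)
                     \<and> (lam $ j) ^ (Suc n) > s_seq lam n $ j / (1 + real b)))"

definition supp :: "'a::metric_space measure \<Rightarrow> 'a set" where
  "supp \<mu> = {x. \<forall>e>0. emeasure \<mu> (ball x e) > 0}"

definition cs_prob_measures :: "('a::euclidean_space) measure set" where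
  "cs_prob_measures = {\<mu>. prob_space \<mu> \<and> sets \<mu> = sets borel \<and> compact (supp \<mu>)}"

definition floor_entropy :: "(real^'n) measure \<Rightarrow> real^'n \<Rightarrow> real^'n \<Rightarrow> real" where
  "floor_entropy \<mu> r x =
     - (\<Sum>\<^sub>\<infinity>k::int^'n. (let p = measure \<mu> {y. (\<chi> i. \<lfloor>y $ i / r $ i + x $ i\<rfloor>) = k}
                         in p * log 2 p))"

definition avg_entropy :: "(real^'n) measure \<Rightarrow> real^'n \<Rightarrow> real" where
  "avg_entropy \<mu> r =
     (LINT x : {x. \<forall>i. 0 \<le> x $ i \<and> x $ i < 1} | lborel. floor_entropy \<mu> r x)"

definition cond_avg_entropy :: "(real^'n) measure \<Rightarrow> real^'n \<Rightarrow> real^'n \<Rightarrow> real" where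
  "cond_avg_entropy \<mu> r r' = avg_entropy \<mu> r - avg_entropy \<mu> r'"

end

theory Submission
  imports Defs
begin



lemma s_step:
  fixes s L :: real and n :: nat
  assumes L: "0 < L" "L < 1" and s: "L ^ n \<le> s"
  defines "b \<equiv> (THE b::nat. 0 < b \<and> s / real b \<ge> L ^ (Suc n) \<and> L ^ (Suc n) > s / (1 + real b))"
  shows "L ^ Suc n \<le> s / real b \<and> s / real b \<le> 2 * L ^ Suc n"
proof -
  let ?P = "\<lambda>b::nat. 0 < b \<and> s / real b \<ge> L ^ (Suc n) \<and> L ^ (Suc n) > s / (1 + real b)"
  have Lp: "0 < L ^ Suc n" using L by simp
  have lt: "L ^ Suc n < L ^ n" using L by (simp add: power_strict_decreasing)
  have sp: "0 < s" using s L by (meson less_le_trans zero_less_power)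
  define q where "q = s / L ^ Suc n"
  have q1: "1 < q" unfolding q_def using lt s Lp by (simp add: field_simps)
  define b0 where "b0 = nat \<lfloor>q\<rfloor>"
  have b0: "real b0 \<le> q" "q < real b0 + 1" "0 < b0" unfolding b0_def using q1
    by (auto simp: of_nat_nat)
  have P_iff: "?P b \<longleftrightarrow> b = b0" for b
  proof
    assume Pb: "?P b"
    obtain P where P: "P = L ^ Suc n" by blast
    have Pp: "0 < P" using P Lp by simp
    have h1: "P \<le> s / real b" "0 < real b" using Pb P by auto
    have "P * real b \<le> s" using h1 by (simp add: pos_le_divide_eq)
    then have "real b \<le> q" using Pp unfolding q_def P[symmetric] by (simp add: field_simps)
    moreover have "q < real b + 1" using Pb Pp sp unfolding q_def P[symmetric] by (simp add: field_simps)
    ultimately show "b = b0" using b0 unfolding b0_def by linarith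
  next
    assume "b = b0"
    then show "?P b" using b0 Lp sp unfolding q_def by (simp add: field_simps)
  qed
  have bb: "b = b0" unfolding b_def using P_iff by simp
  have Pb: "?P b" using P_iff bb by simp
  have "s / real b \<le> 2 * L ^ Suc n"
  proof -
    have "s < L ^ Suc n * (1 + real b)" using Pb by (simp add: field_simps)
    also have "\<dots> \<le> L ^ Suc n * (2 * real b)" using Pb Lp by (intro mult_left_mono) auto
    finally show ?thesis using Pb by (simp add: field_simps)
  qed
  then show ?thesis using Pb by simp
qed

lemma s_bounds:
  fixes lam :: "real^'n"
  assumes "0 < lam $ j" "lam $ j < 1"
  shows "lam $ j ^ n \<le> s_seq lam n $ j \<and> s_seq lam n $ j \<le> 2 * lam $ j ^ n"
proof (induction n)
  case 0 then show ?case by simp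
next
  case (Suc n)
  then show ?case using s_step[OF assms, of n "s_seq lam n $ j"] by simp
qed




lemma supp_AE:
  fixes \<theta> :: "'a::{metric_space,second_countable_topology} measure"
  assumes sets: "sets \<theta> = sets borel"
  shows "AE y in \<theta>. y \<in> supp \<theta>"
proof -
  define C where "C = {ball x e | x e. e > 0 \<and> emeasure \<theta> (ball x e) = 0}"
  have eq: "UNIV - supp \<theta> = \<Union>C"
  proof
    show "UNIV - supp \<theta> \<subseteq> \<Union>C"
    proof
      fix x assume "x \<in> UNIV - supp \<theta>"
      then obtain e where "e > 0" "\<not> emeasure \<theta> (ball x e) > 0" unfolding supp_def by auto
      then have "ball x e \<in> C" unfolding C_def by (auto simp: zero_less_iff_neq_zero)
      then show "x \<in> \<Union>C" using \<open>e > 0\<close> by (meson UnionI centre_in_ball)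
    qed
  next
    show "\<Union>C \<subseteq> UNIV - supp \<theta>"
    proof
      fix z assume "z \<in> \<Union>C"
      then obtain x e where z: "z \<in> ball x e" "e > 0" "emeasure \<theta> (ball x e) = 0" unfolding C_def by auto
      define e' where "e' = e - dist x z"
      have e': "e' > 0" using z unfolding e'_def by simp
      have sub: "ball z e' \<subseteq> ball x e"
      proof
        fix w assume "w \<in> ball z e'"
        then have "dist z w < e'" by simp
        moreover have "dist x w \<le> dist x z + dist z w" by (rule dist_triangle)
        ultimately show "w \<in> ball x e" unfolding e'_def by simp
      qed
      have "emeasure \<theta> (ball z e') \<le> emeasure \<theta> (ball x e)"
        by (rule emeasure_mono[OF sub]) (simp add: sets)
      then have "emeasure \<theta> (ball z e') = 0" using z by simp
      then show "z \<in> UNIV - supp \<theta>" using e' unfolding supp_def by auto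
    qed
  qed
  obtain D where D: "D \<subseteq> C" "countable D" "\<Union>D = \<Union>C"
    using Lindelof[of C] unfolding C_def by blast
  have "(\<Union>S\<in>D. S) \<in> null_sets \<theta>"
  proof (rule null_sets_UN')
    show "countable D" by fact
    fix S assume "S \<in> D"
    then obtain x e where "S = ball x e" "emeasure \<theta> (ball x e) = 0" using D(1) unfolding C_def by auto
    then show "S \<in> null_sets \<theta>" by (simp add: null_sets_def sets)
  qed
  then have "UNIV - supp \<theta> \<in> null_sets \<theta>" using eq D by simp
  then show ?thesis
    by (rule AE_I') auto
qed




definition Ent :: "'a measure \<Rightarrow> ('a \<Rightarrow> 'b) \<Rightarrow> real" where
  "Ent M Z = - (\<Sum>\<^sub>\<infinity>k. (let p = measure M {y. Z y = k} in p * log 2 p))"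

lemma floor_entropy_Ent: "floor_entropy \<mu> r x = Ent \<mu> (\<lambda>y. \<chi> i. \<lfloor>y $ i / r $ i + x $ i\<rfloor>)"
  by (simp add: floor_entropy_def Ent_def)

lemma plogp_bounds:
  fixes p :: real assumes "0 \<le> p" "p \<le> 1"
  shows "0 \<le> - (p * log 2 p) \<and> - (p * log 2 p) \<le> 2"
proof (cases "p = 0")
  case True then show ?thesis by simp
next
  case False
  then have p: "0 < p" using assms by simp
  have l: "log 2 p \<le> 0" using p assms by simp
  have "ln (1/p) \<le> 1/p - 1" using p by (intro ln_le_minus_one) simp
  then have "- ln p \<le> 1/p - 1" using p by (simp add: ln_div)
  then have "p * (- ln p) \<le> p * (1/p - 1)" using p by (intro mult_left_mono) auto
  moreover have "p * (1/p - 1) = 1 - p" using p by (simp add: field_simps)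
  ultimately have a: "- (p * ln p) \<le> 1" using p by linarith
  have ln2: "1/2 < ln (2::real)" using ln_2_less_1 ln2_ge_two_thirds by linarith
  have "- (p * log 2 p) = - (p * ln p) / ln 2" by (simp add: log_def)
  also have "\<dots> \<le> 1 / ln 2" using a ln2 by (intro divide_right_mono) auto
  also have "\<dots> \<le> 2" using ln2 by (simp add: field_simps)
  finally show ?thesis using l p by (simp add: mult_nonneg_nonpos)
qed

lemma Ent_nonneg:
  assumes "prob_space M" shows "0 \<le> Ent M Z"
proof -
  interpret prob_space M by fact
  have "0 \<le> (\<Sum>\<^sub>\<infinity>k. - (let p = measure M {y. Z y = k} in p * log 2 p))"
    using plogp_bounds[OF measure_nonneg prob_le_1] by (intro infsum_nonneg) (simp add: Let_def)
  then show ?thesis unfolding Ent_def infsum_uminus .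
qed

lemma Ent_finite:
  assumes "prob_space M" and AE: "AE y in M. Z y \<in> K" and fin: "finite K"
    and meas: "\<And>k. {y. Z y = k} \<in> sets M"
  shows "Ent M Z = - (\<Sum>k\<in>K. measure M {y. Z y = k} * log 2 (measure M {y. Z y = k}))"
proof -
  interpret prob_space M by fact
  have z: "measure M {y. Z y = k} = 0" if "k \<notin> K" for k
  proof -
    have "measure M {y. Z y = k} = measure M {}"
      by (rule measure_eq_AE) (use AE that meas in auto)
    then show ?thesis by simp
  qed
  have "(\<Sum>\<^sub>\<infinity>k. (let p = measure M {y. Z y = k} in p * log 2 p)) =
        (\<Sum>\<^sub>\<infinity>k\<in>K. (let p = measure M {y. Z y = k} in p * log 2 p))"
    by (rule infsum_cong_neutral) (auto simp: z)
  also have "\<dots> = (\<Sum>k\<in>K. measure M {y. Z y = k} * log 2 (measure M {y. Z y = k}))"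
    using fin by (simp add: Let_def)
  finally show ?thesis unfolding Ent_def by simp
qed

context information_space
begin

lemma Ent_eq_entropy:
  assumes b2: "b = 2" and sp: "space M = UNIV" and AE: "AE y in M. y \<in> B"
    and Bm: "B \<in> sets M" and b0: "b0 \<in> B" and fin: "finite (Z ` B)"
    and meas: "\<And>k. {y. Z y = k} \<in> sets M"
  shows "simple_function M (\<lambda>y. if y \<in> B then Z y else Z b0)"
    and "Ent M Z = \<H>(\<lambda>y. if y \<in> B then Z y else Z b0)"
proof -
  define Z' where "Z' = (\<lambda>y. if y \<in> B then Z y else Z b0)"
  have rng: "Z' ` space M = Z ` B" using b0 unfolding Z'_def sp by auto
  have pre: "{y. Z' y = k} = (B \<inter> {y. Z y = k}) \<union> (if Z b0 = k then UNIV - B else {})" for k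
    unfolding Z'_def by auto
  have U: "UNIV \<in> sets M" using sets.top[of M] sp by simp
  have measZ': "{y. Z' y = k} \<in> sets M" for k
    unfolding pre using Bm meas U by (auto intro!: sets.Un sets.Int sets.Diff)
  show sf: "simple_function M (\<lambda>y. if y \<in> B then Z y else Z b0)"
    unfolding Z'_def[symmetric] simple_function_def rng
    using fin measZ' by (simp add: sp vimage_def)
  have eqm: "measure M {y. Z y = k} = measure M {y. Z' y = k}" for k
    by (rule measure_eq_AE) (use AE meas measZ' in \<open>auto simp: Z'_def\<close>)
  have "Ent M Z = Ent M Z'" unfolding Ent_def eqm ..
  also have "\<dots> = - (\<Sum>k\<in>Z ` B. measure M {y. Z' y = k} * log 2 (measure M {y. Z' y = k}))"
  proof (rule Ent_finite)
    show "AE y in M. Z' y \<in> Z ` B" using rng sp by (intro AE_I2) auto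
  qed (use measZ' prob_space_axioms fin in auto)
  also have "\<dots> = \<H>(Z')"
    by (subst entropy_simple_distributed[OF simple_distributedI[OF sf[folded Z'_def] measure_nonneg refl]])
       (simp add: rng[unfolded sp] b2 sp vimage_def)
  finally show "Ent M Z = \<H>(\<lambda>y. if y \<in> B then Z y else Z b0)" unfolding Z'_def .
qed

end




context information_space
begin

lemma entropy_const_le: "\<H>(\<lambda>y. c) \<le> 0"
proof -
  have sf: "simple_function M (\<lambda>y. c)" by simp
  have "\<H>(\<lambda>y. c) = - (\<Sum>x\<in>(\<lambda>y. c) ` space M. prob ((\<lambda>y. c) -` {x} \<inter> space M) * log b (prob ((\<lambda>y. c) -` {x} \<inter> space M)))"
    by (rule entropy_simple_distributed[OF simple_distributedI[OF sf measure_nonneg refl]])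
  also have "(\<lambda>y. c) ` space M = {c}" using not_empty by auto
  then have "- (\<Sum>x\<in>(\<lambda>y. c) ` space M. prob ((\<lambda>y. c) -` {x} \<inter> space M) * log b (prob ((\<lambda>y. c) -` {x} \<inter> space M))) = 0"
    by (simp add: prob_space)
  finally show ?thesis by simp
qed

lemma entropy_subadd_fun:
  fixes X :: "'i \<Rightarrow> 'a \<Rightarrow> 'c"
  assumes sf: "\<And>j. simple_function M (X j)" and fin: "finite S"
  shows "simple_function M (\<lambda>y. (\<lambda>j. if j \<in> S then X j y else undefined))
    \<and> \<H>(\<lambda>y. (\<lambda>j. if j \<in> S then X j y else undefined)) \<le> (\<Sum>j\<in>S. \<H>(X j))"
  using fin
proof (induction S rule: finite_induct)
  case empty
  then show ?case using entropy_const_le[of "\<lambda>j. undefined"] by simp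
next
  case (insert i S)
  define W where "W = (\<lambda>y. (\<lambda>j. if j \<in> S then X j y else undefined))"
  define f where "f = (\<lambda>(a::'c, w::'i \<Rightarrow> 'c). w(i := a))"
  define P where "P = (\<lambda>y. (X i y, W y))"
  have sfW: "simple_function M W" and HW: "\<H>(W) \<le> (\<Sum>j\<in>S. \<H>(X j))"
    using insert.IH unfolding W_def by auto
  have sfP: "simple_function M P" unfolding P_def by (rule simple_function_Pair[OF sf sfW])
  have eq: "(\<lambda>y. (\<lambda>j. if j \<in> insert i S then X j y else undefined)) = f \<circ> P"
    unfolding f_def P_def W_def by (auto simp: fun_eq_iff)
  have "\<H>(f \<circ> P) \<le> \<H>(P)" by (rule entropy_data_processing[OF sfP])
  also have "\<H>(P) = \<H>(X i) + \<H>(W | X i)" unfolding P_def by (rule entropy_chain_rule[OF sf sfW])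
  also have "\<H>(W | X i) \<le> \<H>(W)" by (rule conditional_entropy_less_eq_entropy[OF sfW sf])
  finally have "\<H>(f \<circ> P) \<le> \<H>(X i) + (\<Sum>j\<in>S. \<H>(X j))" using HW by simp
  moreover have "simple_function M (f \<circ> P)" using sfP by (rule simple_function_compose)
  ultimately show ?case unfolding eq using insert by simp
qed

lemma entropy_subadd_vec:
  fixes X :: "'n::finite \<Rightarrow> 'a \<Rightarrow> 'c"
  assumes sf: "\<And>j. simple_function M (X j)"
  shows "\<H>(\<lambda>y. \<chi> j. X j y) \<le> (\<Sum>j\<in>UNIV. \<H>(X j))"
proof -
  define W where "W = (\<lambda>y. (\<lambda>j. if j \<in> UNIV then X j y else undefined))"
  have "simple_function M W \<and> \<H>(W) \<le> (\<Sum>j\<in>UNIV. \<H>(X j))"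
    unfolding W_def by (rule entropy_subadd_fun[of X UNIV]) (use sf in auto)
  then have sfW: "simple_function M W" and HW: "\<H>(W) \<le> (\<Sum>j\<in>UNIV. \<H>(X j))" by auto
  have eq: "(\<lambda>y. \<chi> j. X j y) = vec_lambda \<circ> W" unfolding W_def by (auto simp: fun_eq_iff)
  have "\<H>(vec_lambda \<circ> W) \<le> \<H>(W)" by (rule entropy_data_processing[OF sfW])
  then show ?thesis unfolding eq using HW by simp
qed

lemma entropy_coord_le:
  fixes X :: "'a \<Rightarrow> 'c^'n"
  assumes sf: "simple_function M X"
  shows "\<H>(\<lambda>y. X y $ j) \<le> \<H>(X)"
proof -
  have eq: "(\<lambda>y. X y $ j) = (\<lambda>v. v $ j) \<circ> X" by (auto simp: fun_eq_iff)
  show ?thesis unfolding eq by (rule entropy_data_processing[OF sf])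
qed

end




lemma finite_vec_set:
  fixes S :: "'n::finite \<Rightarrow> 'a set"
  assumes "\<And>i. finite (S i)"
  shows "finite {k::'a^'n. \<forall>i. k $ i \<in> S i}"
proof -
  have "{k::'a^'n. \<forall>i. k $ i \<in> S i} \<subseteq> vec_lambda ` (PiE UNIV S)"
  proof
    fix k :: "'a^'n" assume "k \<in> {k::'a^'n. \<forall>i. k $ i \<in> S i}"
    then have "(\<lambda>i. k $ i) \<in> PiE UNIV S" by auto
    moreover have "k = vec_lambda (\<lambda>i. k $ i)" by simp
    ultimately show "k \<in> vec_lambda ` (PiE UNIV S)" by blast
  qed
  moreover have "finite (PiE UNIV S)" using assms by (intro finite_PiE) auto
  ultimately show ?thesis by (meson finite_imageI finite_subset)
qed

lemma floor_coord_finite: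
  fixes B :: "(real^'n) set"
  assumes C: "\<And>y i. y \<in> B \<Longrightarrow> \<bar>y $ i\<bar> \<le> C" and r: "0 < r"
  shows "finite ((\<lambda>y. \<lfloor>y $ j / r + t\<rfloor>) ` B)"
proof -
  define R where "R = C / r + \<bar>t\<bar>"
  have "(\<lambda>y. \<lfloor>y $ j / r + t\<rfloor>) ` B \<subseteq> {\<lfloor>- R\<rfloor> .. \<lfloor>R\<rfloor>}"
  proof
    fix z assume "z \<in> (\<lambda>y. \<lfloor>y $ j / r + t\<rfloor>) ` B"
    then obtain y where y: "y \<in> B" "z = \<lfloor>y $ j / r + t\<rfloor>" by auto
    have "\<bar>y $ j / r\<bar> \<le> C / r" using C[OF y(1), of j] r by (simp add: abs_div divide_right_mono)
    then have "- R \<le> y $ j / r + t" "y $ j / r + t \<le> R" unfolding R_def by linarith+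
    then show "z \<in> {\<lfloor>- R\<rfloor> .. \<lfloor>R\<rfloor>}" using y by (auto intro: floor_mono)
  qed
  then show ?thesis by (rule finite_subset) simp
qed

context information_space begin
lemma vec_pointwise0:
  fixes Zj :: "'n::finite \<Rightarrow> 'a \<Rightarrow> 'c"
  assumes b2: "b = 2" and sp: "space M = UNIV" and AE: "AE y in M. y \<in> B"
    and Bm': "B \<in> sets M" and b0: "b0 \<in> B" and finj: "\<And>j. finite (Zj j ` B)"
    and measj: "\<And>j k. {y. Zj j y = k} \<in> sets M"
  shows "Ent M (\<lambda>y. \<chi> j. Zj j y) \<le> (\<Sum>j\<in>UNIV. Ent M (Zj j))"
    and "Ent M (Zj j) \<le> Ent M (\<lambda>y. \<chi> j. Zj j y)"
proof -
  define Z where "Z = (\<lambda>y. \<chi> j. Zj j y)"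
  have "finite {k::'c^'n. \<forall>i. k $ i \<in> Zj i ` B}" by (rule finite_vec_set[OF finj])
  moreover have "Z ` B \<subseteq> {k::'c^'n. \<forall>i. k $ i \<in> Zj i ` B}" unfolding Z_def by auto
  ultimately have fin: "finite (Z ` B)" by (rule finite_subset[rotated])
  have meas: "{y. Z y = k} \<in> sets M" for k
  proof -
    have "{y. Z y = k} = {y. \<forall>i. Zj i y = k $ i}" unfolding Z_def by (auto simp: vec_eq_iff)
    also have "\<dots> = (\<Inter>i. {y. Zj i y = k $ i})" by auto
    also have "\<dots> \<in> sets M" using measj by (intro sets.finite_INT) auto
    finally show ?thesis .
  qed
  define Z' where "Z' = (\<lambda>y. if y \<in> B then Z y else Z b0)"
  define Zj' where "Zj' = (\<lambda>j y. if y \<in> B then Zj j y else Zj j b0)"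
  note EZ = Ent_eq_entropy[OF b2 sp AE Bm' b0 fin meas, folded Z'_def]
  have EZj: "simple_function M (Zj' j) \<and> Ent M (Zj j) = \<H>(Zj' j)" for j
    unfolding Zj'_def using Ent_eq_entropy[OF b2 sp AE Bm' b0 finj measj] by blast
  have Z'_eq: "Z' = (\<lambda>y. \<chi> j. Zj' j y)" unfolding Z'_def Zj'_def Z_def by (auto simp: vec_eq_iff)
  have Zj'_eq: "Zj' j = (\<lambda>y. Z' y $ j)" for j unfolding Z'_def Zj'_def Z_def by auto
  have "\<H>(Z') \<le> (\<Sum>j\<in>UNIV. \<H>(Zj' j))"
    unfolding Z'_eq by (rule entropy_subadd_vec) (use EZj in auto)
  then show "Ent M (\<lambda>y. \<chi> j. Zj j y) \<le> (\<Sum>j\<in>UNIV. Ent M (Zj j))"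
    using EZ EZj unfolding Z_def by simp
  have "\<H>(Zj' j) \<le> \<H>(Z')" unfolding Zj'_eq by (rule entropy_coord_le) (use EZ in auto)
  then show "Ent M (Zj j) \<le> Ent M (\<lambda>y. \<chi> j. Zj j y)"
    using EZ EZj unfolding Z_def by simp
qed
end

lemma floor_pointwise:
  fixes \<theta> :: "(real^'n::finite) measure"
  assumes P: "prob_space \<theta>" and sets: "sets \<theta> = sets borel" and AE: "AE y in \<theta>. y \<in> B"
    and Bm: "B \<in> sets borel" and b0: "b0 \<in> B" and C: "\<And>y i. y \<in> B \<Longrightarrow> \<bar>y $ i\<bar> \<le> C"
    and r: "\<And>i. 0 < r $ i"
  shows "Ent \<theta> (\<lambda>y. \<chi> i. \<lfloor>y $ i / r $ i + x $ i\<rfloor>) \<le> (\<Sum>j\<in>UNIV. Ent \<theta> (\<lambda>y. \<lfloor>y $ j / r $ j + x $ j\<rfloor>))"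
    and "Ent \<theta> (\<lambda>y. \<lfloor>y $ j / r $ j + x $ j\<rfloor>) \<le> Ent \<theta> (\<lambda>y. \<chi> i. \<lfloor>y $ i / r $ i + x $ i\<rfloor>)"
proof -
  interpret prob_space \<theta> by fact
  interpret information_space \<theta> 2 by standard simp
  show "Ent \<theta> (\<lambda>y. \<chi> i. \<lfloor>y $ i / r $ i + x $ i\<rfloor>) \<le> (\<Sum>j\<in>UNIV. Ent \<theta> (\<lambda>y. \<lfloor>y $ j / r $ j + x $ j\<rfloor>))"
    "Ent \<theta> (\<lambda>y. \<lfloor>y $ j / r $ j + x $ j\<rfloor>) \<le> Ent \<theta> (\<lambda>y. \<chi> i. \<lfloor>y $ i / r $ i + x $ i\<rfloor>)"
  proof -
    have sp: "space \<theta> = UNIV" using sets_eq_imp_space_eq[OF sets] by simp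
    have finj: "\<And>j. finite ((\<lambda>j y. \<lfloor>y $ j / r $ j + x $ j\<rfloor>) j ` B)" by (simp add: floor_coord_finite[OF C r])
    have measj: "\<And>j k. {y. (\<lambda>j y. \<lfloor>y $ j / r $ j + x $ j\<rfloor>) j y = k} \<in> sets \<theta>" unfolding sets by measurable
    have Bm': "B \<in> sets \<theta>" using Bm sets by simp
    note V = vec_pointwise0[where Zj="\<lambda>j y. \<lfloor>y $ j / r $ j + x $ j\<rfloor>", OF refl sp AE Bm' b0 finj measj]
    show "Ent \<theta> (\<lambda>y. \<chi> i. \<lfloor>y $ i / r $ i + x $ i\<rfloor>) \<le> (\<Sum>j\<in>UNIV. Ent \<theta> (\<lambda>y. \<lfloor>y $ j / r $ j + x $ j\<rfloor>))"
      "Ent \<theta> (\<lambda>y. \<lfloor>y $ j / r $ j + x $ j\<rfloor>) \<le> Ent \<theta> (\<lambda>y. \<chi> i. \<lfloor>y $ i / r $ i + x $ i\<rfloor>)"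
      using V(1) V(2)[where j=j] by auto
  qed
qed




definition hb :: "real \<Rightarrow> real" where
  "hb p = - (p * log 2 p) - ((1 - p) * log 2 (1 - p))"

lemma hb_0[simp]: "hb 0 = 0" and hb_1[simp]: "hb 1 = 0" by (simp_all add: hb_def)

lemma hb_bounds: "0 \<le> p \<Longrightarrow> p \<le> 1 \<Longrightarrow> 0 \<le> hb p \<and> hb p \<le> 4"
  using plogp_bounds[of p] plogp_bounds[of "1 - p"] unfolding hb_def by auto

definition psi :: "(real^'n) measure \<Rightarrow> 'n \<Rightarrow> real \<Rightarrow> real" where
  "psi \<theta> j c = hb (measure \<theta> {y. c \<le> y $ j})"

lemma psi_bounds: "prob_space \<theta> \<Longrightarrow> 0 \<le> psi \<theta> j c \<and> psi \<theta> j c \<le> 4"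
  unfolding psi_def by (intro hb_bounds) (auto simp: prob_space.prob_le_1)

lemma psi_measurable:
  assumes P: "prob_space \<theta>" and sets: "sets \<theta> = sets borel"
  shows "psi \<theta> j \<in> borel_measurable borel"
proof -
  interpret prob_space \<theta> by fact
  have "mono (\<lambda>c. - measure \<theta> {y. c \<le> y $ j})"
  proof (rule monoI)
    fix a b :: real assume "a \<le> b"
    have "measure \<theta> {y. b \<le> y $ j} \<le> measure \<theta> {y. a \<le> y $ j}"
      by (rule finite_measure_mono) (use \<open>a \<le> b\<close> sets in auto)
    then show "- measure \<theta> {y. a \<le> y $ j} \<le> - measure \<theta> {y. b \<le> y $ j}" by simp
  qed
  then have m: "(\<lambda>c. - measure \<theta> {y. c \<le> y $ j}) \<in> borel_measurable borel" by (rule borel_measurable_mono)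
  have m2: "(\<lambda>c. measure \<theta> {y. c \<le> y $ j}) \<in> borel_measurable borel"
    using borel_measurable_uminus[OF m] by simp
  show ?thesis unfolding psi_def hb_def using m2 by measurable
qed

lemma psi_zero:
  assumes P: "prob_space \<theta>" and sets: "sets \<theta> = sets borel"
    and AE: "AE y in \<theta>. l \<le> y $ j \<and> y $ j \<le> l + 2/3"
    and c: "c \<le> l \<or> l + 2/3 < c"
  shows "psi \<theta> j c = 0"
proof -
  interpret prob_space \<theta> by fact
  have ms: "{y. c \<le> y $ j} \<in> sets \<theta>" using sets by simp
  show ?thesis
  proof (cases "c \<le> l")
    case True
    have "measure \<theta> {y. c \<le> y $ j} = measure \<theta> (space \<theta>)"
      by (rule measure_eq_AE) (use AE True ms in auto)
    then show ?thesis unfolding psi_def by (simp add: prob_space)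
  next
    case False
    then have cc: "l + 2/3 < c" using c by simp
    have "measure \<theta> {y. c \<le> y $ j} = measure \<theta> {}"
      by (rule measure_eq_AE) (use AE cc ms in auto)
    then show ?thesis unfolding psi_def by simp
  qed
qed

lemma Ent_coord:
  assumes P: "prob_space \<theta>" and sets: "sets \<theta> = sets borel"
    and AE: "AE y in \<theta>. l \<le> y $ j \<and> y $ j \<le> l + 2/3" and rho: "1 \<le> \<rho>"
  shows "Ent \<theta> (\<lambda>y. \<lfloor>y $ j / \<rho> + t\<rfloor>) = psi \<theta> j (\<rho> * (real_of_int (\<lfloor>l / \<rho> + t\<rfloor> + 1) - t))"
proof -
  interpret prob_space \<theta> by fact
  define m0 where "m0 = \<lfloor>l / \<rho> + t\<rfloor> + 1"
  define c where "c = \<rho> * (real_of_int m0 - t)"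
  define Z where "Z = (\<lambda>y. \<lfloor>y $ j / \<rho> + t\<rfloor>)"
  have rp: "0 < \<rho>" using rho by simp
  have key: "Z y \<in> {m0 - 1, m0} \<and> (Z y = m0 \<longleftrightarrow> c \<le> y $ j)" if y: "l \<le> y $ j" "y $ j \<le> l + 2/3" for y
  proof -
    have a: "l / \<rho> \<le> y $ j / \<rho>" using y rp by (simp add: divide_right_mono)
    have "y $ j / \<rho> \<le> (l + 2/3) / \<rho>" using y rp by (simp add: divide_right_mono)
    also have "\<dots> = l / \<rho> + (2/3) / \<rho>" by (simp add: add_divide_distrib)
    also have "(2/3) / \<rho> \<le> 2/3" using rho by (simp add: field_simps)
    finally have b: "y $ j / \<rho> \<le> l / \<rho> + 2/3" by simp
    have f1: "real_of_int (m0 - 1) \<le> l / \<rho> + t" unfolding m0_def by simp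
    have f2: "l / \<rho> + t < real_of_int m0" unfolding m0_def by linarith
    have "m0 - 1 \<le> Z y" unfolding Z_def using f1 a by (simp add: le_floor_iff)
    moreover have "Z y \<le> m0" unfolding Z_def using f2 b by (simp add: floor_le_iff)
    moreover have "Z y = m0 \<longleftrightarrow> real_of_int m0 \<le> y $ j / \<rho> + t"
    proof -
      have "m0 \<le> Z y \<longleftrightarrow> real_of_int m0 \<le> y $ j / \<rho> + t" unfolding Z_def by (simp add: le_floor_iff)
      then show ?thesis using calculation by linarith
    qed
    moreover have "real_of_int m0 \<le> y $ j / \<rho> + t \<longleftrightarrow> c \<le> y $ j"
      unfolding c_def using rp by (simp add: field_simps)
    ultimately show ?thesis by auto
  qed
  have mZ: "{y. Z y = k} \<in> sets \<theta>" for k unfolding Z_def sets by measurable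
  have ms: "{y. c \<le> y $ j} \<in> sets \<theta>" using sets by simp
  have AEK: "AE y in \<theta>. Z y \<in> {m0 - 1, m0}" using AE by eventually_elim (use key in auto)
  have p1: "measure \<theta> {y. Z y = m0} = measure \<theta> {y. c \<le> y $ j}"
    by (rule measure_eq_AE) (use AE key mZ ms in auto)
  have key2: "Z y = m0 - 1 \<longleftrightarrow> \<not> c \<le> y $ j" if "l \<le> y $ j" "y $ j \<le> l + 2/3" for y
    using key[OF that] by auto
  have "measure \<theta> {y. Z y = m0 - 1} = measure \<theta> (space \<theta> - {y. c \<le> y $ j})"
  proof (rule measure_eq_AE)
    show "AE x in \<theta>. (x \<in> {y. Z y = m0 - 1}) = (x \<in> space \<theta> - {y. c \<le> y $ j})"
      using AE by eventually_elim (use key2 sets_eq_imp_space_eq[OF sets] in auto)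
  qed (use mZ ms in auto)
  also have "\<dots> = 1 - measure \<theta> {y. c \<le> y $ j}" using ms by (rule prob_compl)
  finally have p0: "measure \<theta> {y. Z y = m0 - 1} = 1 - measure \<theta> {y. c \<le> y $ j}" .
  have "Ent \<theta> Z = - (\<Sum>k\<in>{m0 - 1, m0}. measure \<theta> {y. Z y = k} * log 2 (measure \<theta> {y. Z y = k}))"
    by (rule Ent_finite[OF P AEK]) (use mZ in auto)
  also have "\<dots> = psi \<theta> j c" unfolding psi_def hb_def by (simp add: p1 p0)
  finally show ?thesis unfolding Z_def c_def m0_def .
qed




lemma psi_integrable:
  assumes P: "prob_space \<theta>" and sets: "sets \<theta> = sets borel"
    and AE: "AE y in \<theta>. l \<le> y $ j \<and> y $ j \<le> l + 2/3"
  shows "integrable lborel (psi \<theta> j)"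
proof (rule integrableI_bounded_set[where A="{l..l+2/3}" and B=4])
  show "psi \<theta> j \<in> borel_measurable lborel" using psi_measurable[OF P sets] by simp
  show "AE x in lborel. x \<in> {l..l + 2 / 3} \<longrightarrow> norm (psi \<theta> j x) \<le> 4"
    using psi_bounds[OF P] by auto
  show "AE x in lborel. x \<notin> {l..l + 2 / 3} \<longrightarrow> psi \<theta> j x = 0"
    using psi_zero[OF P sets AE] by (intro AE_I2) auto
qed auto

lemma coord_integral:
  assumes P: "prob_space \<theta>" and sets: "sets \<theta> = sets borel"
    and AE: "AE y in \<theta>. l \<le> y $ j \<and> y $ j \<le> l + 2/3" and rho: "1 \<le> \<rho>"
  shows "\<exists>g. g \<in> borel_measurable borel \<and> (\<forall>t. \<bar>g t\<bar> \<le> 8) \<and>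
     (\<forall>t\<in>{0..<1}. Ent \<theta> (\<lambda>y. \<lfloor>y $ j / \<rho> + t\<rfloor>) = g t) \<and>
     (\<integral>t. indicator {0..<1} t * g t \<partial>lborel) = (\<integral>s. psi \<theta> j s \<partial>lborel) / \<rho>"
proof -
  have rp: "0 < \<rho>" using rho by simp
  define k where "k = \<lfloor>l / \<rho>\<rfloor>"
  define h where "h = (\<lambda>m::int. \<lambda>t. psi \<theta> j (\<rho> * (real_of_int m - t)))"
  define g where "g = (\<lambda>t. h (k+1) t + h (k+2) t)"
  note pm[measurable] = psi_measurable[OF P sets]
  have hm[measurable]: "h m \<in> borel_measurable borel" for m unfolding h_def by measurable
  have gm: "g \<in> borel_measurable borel" unfolding g_def by measurable
  have hb: "\<bar>h m t\<bar> \<le> 4" for m t unfolding h_def using psi_bounds[OF P] by (simp add: abs_le_iff)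
  have gb: "\<bar>g t\<bar> \<le> 8" for t unfolding g_def using hb[of "k+1" t] hb[of "k+2" t] by simp
  have geq: "Ent \<theta> (\<lambda>y. \<lfloor>y $ j / \<rho> + t\<rfloor>) = g t" if t: "0 \<le> t" "t < 1" for t
  proof -
    define m0 where "m0 = \<lfloor>l / \<rho> + t\<rfloor> + 1"
    have E: "Ent \<theta> (\<lambda>y. \<lfloor>y $ j / \<rho> + t\<rfloor>) = h m0 t"
      unfolding h_def m0_def by (rule Ent_coord[OF P sets AE rho])
    have f1: "real_of_int (m0 - 1) \<le> l / \<rho> + t" unfolding m0_def by simp
    have f2: "l / \<rho> + t < real_of_int m0" unfolding m0_def by linarith
    have m0k: "m0 = k + 1 \<or> m0 = k + 2"
    proof -
      have "k \<le> \<lfloor>l / \<rho> + t\<rfloor>" unfolding k_def using t by (intro floor_mono) simp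
      moreover have "\<lfloor>l / \<rho> + t\<rfloor> \<le> k + 1" unfolding k_def using t by linarith
      ultimately show ?thesis unfolding m0_def by linarith
    qed
    have lo: "h (m0 - 1) t = 0"
    proof -
      have "\<rho> * (real_of_int (m0 - 1) - t) \<le> l"
        using f1 rp by (simp add: field_simps)
      then show ?thesis unfolding h_def by (intro psi_zero[OF P sets AE]) simp
    qed
    have hi: "h (m0 + 1) t = 0"
    proof -
      have "l < \<rho> * (real_of_int m0 - t)" using f2 rp by (simp add: field_simps)
      then have "l + 2/3 < \<rho> * (real_of_int (m0 + 1) - t)" using rho by (simp add: algebra_simps)
      then show ?thesis unfolding h_def by (intro psi_zero[OF P sets AE]) simp
    qed
    show ?thesis using m0k E lo hi unfolding g_def by (auto simp: algebra_simps)
  qed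
  have hint: "(\<integral>t. indicator {0..<1} t * h m t \<partial>lborel) =
      (\<integral>s. psi \<theta> j s * indicator {\<rho> * (real_of_int m - 1)<..\<rho> * real_of_int m} s \<partial>lborel) / \<rho>" for m
  proof -
    have "(\<integral>s. psi \<theta> j s * indicator {\<rho> * (real_of_int m - 1)<..\<rho> * real_of_int m} s \<partial>lborel)
       = \<bar>- \<rho>\<bar> *\<^sub>R (\<integral>x. psi \<theta> j (\<rho> * real_of_int m + (- \<rho>) * x) *
            indicator {\<rho> * (real_of_int m - 1)<..\<rho> * real_of_int m} (\<rho> * real_of_int m + (- \<rho>) * x) \<partial>lborel)"
      by (rule lborel_integral_real_affine) (use rp in simp)
    also have "\<dots> = \<rho> * (\<integral>t. indicator {0..<1} t * h m t \<partial>lborel)"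
    proof -
      have "psi \<theta> j (\<rho> * real_of_int m + (- \<rho>) * x) *
            indicator {\<rho> * (real_of_int m - 1)<..\<rho> * real_of_int m} (\<rho> * real_of_int m + (- \<rho>) * x)
          = indicator {0..<1} x * h m x" for x
      proof -
        have "(\<rho> * real_of_int m + (- \<rho>) * x \<in> {\<rho> * (real_of_int m - 1)<..\<rho> * real_of_int m}) = (x \<in> {0..<1})"
          using rp by (auto simp: algebra_simps mult_less_cancel_left_pos zero_le_mult_iff)
        then show ?thesis unfolding h_def indicator_def by (auto simp: algebra_simps)
      qed
      then show ?thesis using rp by simp
    qed
    finally show ?thesis using rp by simp
  qed
  have J: "(\<integral>s. psi \<theta> j s \<partial>lborel) =
     (\<integral>s. psi \<theta> j s * indicator {\<rho> * (real_of_int (k+1) - 1)<..\<rho> * real_of_int (k+1)} s \<partial>lborel) +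
     (\<integral>s. psi \<theta> j s * indicator {\<rho> * (real_of_int (k+2) - 1)<..\<rho> * real_of_int (k+2)} s \<partial>lborel)"
  proof -
    have pt: "psi \<theta> j s = psi \<theta> j s * indicator {\<rho> * (real_of_int (k+1) - 1)<..\<rho> * real_of_int (k+1)} s +
       psi \<theta> j s * indicator {\<rho> * (real_of_int (k+2) - 1)<..\<rho> * real_of_int (k+2)} s" for s
    proof (cases "l < s \<and> s \<le> l + 2/3")
      case True
      have "real_of_int k \<le> l / \<rho>" unfolding k_def by simp
      then have a: "\<rho> * real_of_int k \<le> l" using rp by (simp add: field_simps)
      have "l / \<rho> < real_of_int k + 1" unfolding k_def by linarith
      then have b: "l < \<rho> * real_of_int k + \<rho>" using rp by (simp add: field_simps)
      have "s \<in> {\<rho> * (real_of_int (k+1) - 1)<..\<rho> * real_of_int (k+1)} \<and> s \<notin> {\<rho> * (real_of_int (k+2) - 1)<..\<rho> * real_of_int (k+2)} \<or>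
            s \<notin> {\<rho> * (real_of_int (k+1) - 1)<..\<rho> * real_of_int (k+1)} \<and> s \<in> {\<rho> * (real_of_int (k+2) - 1)<..\<rho> * real_of_int (k+2)}"
        using True a b rho by (auto simp: algebra_simps)
      then show ?thesis by (auto simp: indicator_def)
    next
      case False
      then have "psi \<theta> j s = 0" by (intro psi_zero[OF P sets AE]) auto
      then show ?thesis by simp
    qed
    have I: "integrable lborel (\<lambda>s. psi \<theta> j s * indicator A s)" if "A \<in> sets borel" for A
      using that by (intro integrable_real_mult_indicator psi_integrable[OF P sets AE]) auto
    show ?thesis by (subst pt) (intro Bochner_Integration.integral_add I; simp)
  qed
  have "(\<integral>t. indicator {0..<1} t * g t \<partial>lborel) =
      (\<integral>t. indicator {0..<1} t * h (k+1) t \<partial>lborel) + (\<integral>t. indicator {0..<1} t * h (k+2) t \<partial>lborel)"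
  proof -
    have I: "integrable lborel (\<lambda>t. indicator {0..<1} t * h m t)" for m
    proof (rule integrableI_bounded_set[where A="{0..<1}" and B=4])
      show "(\<lambda>t. indicator {0..<1} t * h m t) \<in> borel_measurable lborel" by simp
      show "AE x in lborel. x \<in> {0..<1} \<longrightarrow> norm (indicator {0..<1} x * h m x) \<le> 4"
        using hb by auto
    qed auto
    show ?thesis unfolding g_def distrib_left by (intro Bochner_Integration.integral_add I)
  qed
  also have "\<dots> = (\<integral>s. psi \<theta> j s \<partial>lborel) / \<rho>" unfolding hint J by (simp add: add_divide_distrib)
  finally show ?thesis using gm gb geq by (intro exI[of _ g]) auto
qed




lemma Basis_vec_axis: "(Basis :: (real^'n::finite) set) = range (\<lambda>i. axis i 1)"
  by (auto simp: Basis_vec_def)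

lemma T_nth:
  fixes f :: "real^'n::finite \<Rightarrow> real"
  shows "(\<Sum>b\<in>Basis. f b *\<^sub>R b) $ i = f (axis i 1)"
proof -
  have "(\<Sum>b\<in>Basis. f b *\<^sub>R b) $ i = (\<Sum>b\<in>Basis. f b * b $ i)" by simp
  also have "\<dots> = (\<Sum>k\<in>UNIV. f (axis k 1) * axis k 1 $ i)"
    unfolding Basis_vec_axis by (subst sum.reindex) (auto simp: inj_on_def axis_eq_axis)
  also have "\<dots> = (\<Sum>k\<in>UNIV. (if k = i then f (axis i 1) else 0))"
    by (rule sum.cong) (auto simp: axis_def)
  also have "\<dots> = f (axis i 1)" by simp
  finally show ?thesis .
qed

lemma T_nth':
  fixes f :: "real^'n::finite \<Rightarrow> real"
  shows "(\<Sum>b\<in>Basis. f b * b $ i) = f (axis i 1)"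
  using T_nth[of f i] by simp

lemma box_coord_integral:
  fixes g :: "real \<Rightarrow> real" and j :: "'n::finite"
  assumes gm[measurable]: "g \<in> borel_measurable borel" and gb: "\<And>t. \<bar>g t\<bar> \<le> C"
  shows "(LINT x:{x::real^'n. \<forall>i. 0 \<le> x $ i \<and> x $ i < 1}|lborel. g (x $ j)) =
         (\<integral>t. indicator {0..<1} t * g t \<partial>lborel)"
proof -
  interpret product_sigma_finite "\<lambda>_::real^'n. lborel :: real measure" by standard
  define Q where "Q = {x::real^'n. \<forall>i. 0 \<le> x $ i \<and> x $ i < 1}"
  define T where "T = (\<lambda>f::real^'n \<Rightarrow> real. \<Sum>b\<in>Basis. f b *\<^sub>R b)"
  define F where "F = (\<lambda>(b::real^'n) u. indicator {0..<1} u * (if b = axis j 1 then g u else 1::real))"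
  have Qm[measurable]: "Q \<in> sets borel"
  proof -
    have "Q = (\<Inter>i. {x::real^'n. 0 \<le> x $ i \<and> x $ i < 1})" unfolding Q_def by auto
    also have "\<dots> \<in> sets borel" by (intro sets.finite_INT) auto
    finally show ?thesis .
  qed
  have Tm: "T \<in> measurable (Pi\<^sub>M Basis (\<lambda>_. lborel)) borel" unfolding T_def by measurable
  have "(LINT x:Q|lborel. g (x $ j)) = (\<integral>x. indicator Q x * g (x $ j) \<partial>lborel)"
    by (simp add: set_lebesgue_integral_def)
  also have "\<dots> = (\<integral>x. indicator Q x * g (x $ j) \<partial>distr (Pi\<^sub>M Basis (\<lambda>_. lborel)) borel T)"
    unfolding T_def by (subst lborel_eq[where 'a="real^'n"]) simp
  also have "\<dots> = (\<integral>f. indicator Q (T f) * g (T f $ j) \<partial>Pi\<^sub>M Basis (\<lambda>_. lborel))"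
    by (subst integral_distr[OF Tm]) (auto)
  also have "\<dots> = (\<integral>f. (\<Prod>b\<in>Basis. F b (f b)) \<partial>Pi\<^sub>M Basis (\<lambda>_. lborel))"
  proof (rule Bochner_Integration.integral_cong[OF refl])
    fix f :: "real^'n \<Rightarrow> real"
    have "(\<Prod>b\<in>Basis. F b (f b)) = (\<Prod>i\<in>UNIV. F (axis i 1) (f (axis i 1)))"
      unfolding Basis_vec_axis by (subst prod.reindex) (auto simp: inj_on_def axis_eq_axis)
    also have "\<dots> = (\<Prod>i\<in>UNIV. indicator {0..<1} (f (axis i 1))) * (\<Prod>i\<in>UNIV. (if i = j then g (f (axis i 1)) else 1))"
      unfolding F_def prod.distrib by (simp add: axis_eq_axis)
    also have "(\<Prod>i\<in>UNIV. (if i = j then g (f (axis i 1)) else 1)) = g (f (axis j 1))"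
      by (simp add: prod.delta)
    also have "(\<Prod>i\<in>UNIV. indicator {0..<1} (f (axis i 1)) :: real) = indicator Q (T f)"
    proof (cases "T f \<in> Q")
      case True
      then have "\<forall>i. 0 \<le> f (axis i 1) \<and> f (axis i 1) < 1" unfolding Q_def T_def by (simp add: T_nth')
      then show ?thesis using True by (simp add: indicator_def)
    next
      case False
      then obtain i where "\<not> (0 \<le> f (axis i 1) \<and> f (axis i 1) < 1)" unfolding Q_def T_def by (auto simp: T_nth')
      then have "indicator {0..<1} (f (axis i 1)) = (0::real)" by (auto simp: indicator_def)
      then have "(\<Prod>i\<in>UNIV. indicator {0..<1} (f (axis i 1)) :: real) = 0" by (intro prod_zero) auto
      then show ?thesis using False by simp
    qed
    finally show "indicator Q (T f) * g (T f $ j) = (\<Prod>b\<in>Basis. F b (f b))" unfolding T_def by (simp add: T_nth')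
  qed
  also have "\<dots> = (\<Prod>b\<in>Basis. (\<integral>u. F b u \<partial>lborel))"
  proof (rule product_integral_prod)
    fix b :: "real^'n"
    show "integrable lborel (F b)"
    proof (rule integrableI_bounded_set[where A="{0..<1}" and B="max C 1"])
      show "F b \<in> borel_measurable lborel" unfolding F_def by measurable
      show "AE x in lborel. x \<in> {0..<1} \<longrightarrow> norm (F b x) \<le> max C 1"
        using gb by (auto simp: F_def intro!: AE_I2) (meson max.coboundedI1)
    qed (auto simp: F_def)
  qed simp
  also have "\<dots> = (\<Prod>i\<in>UNIV. (\<integral>u. F (axis i 1) u \<partial>lborel))"
    unfolding Basis_vec_axis by (subst prod.reindex) (auto simp: inj_on_def axis_eq_axis)
  also have "\<dots> = (\<Prod>i\<in>UNIV. (if i = j then (\<integral>t. indicator {0..<1} t * g t \<partial>lborel) else 1))"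
  proof (rule prod.cong[OF refl])
    fix i
    show "(\<integral>u. F (axis i 1) u \<partial>lborel) = (if i = j then (\<integral>t. indicator {0..<1} t * g t \<partial>lborel) else 1)"
      unfolding F_def by (simp add: axis_eq_axis)
  qed
  also have "\<dots> = (\<integral>t. indicator {0..<1} t * g t \<partial>lborel)" by (simp add: prod.delta)
  finally show ?thesis unfolding Q_def .
qed




lemma avg_bounds:
  fixes \<theta> :: "(real^'n::finite) measure"
  assumes th: "\<theta> \<in> cs_prob_measures" and diam: "diameter (supp \<theta>) \<le> 1/3"
  shows "\<exists>J::'n \<Rightarrow> real. (\<forall>j. 0 \<le> J j) \<and> (\<forall>r. (\<forall>i. 1 \<le> r $ i) \<longrightarrow>
     avg_entropy \<theta> r \<le> (\<Sum>j\<in>UNIV. J j / r $ j) \<and> (\<forall>j. J j / r $ j \<le> avg_entropy \<theta> r))"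
proof -
  have P: "prob_space \<theta>" and sets: "sets \<theta> = sets borel" and cpt: "compact (supp \<theta>)"
    using th unfolding cs_prob_measures_def by auto
  interpret prob_space \<theta> by fact
  have sp: "space \<theta> = UNIV" using sets_eq_imp_space_eq[OF sets] by simp
  define B where "B = supp \<theta>"
  have AEB: "AE y in \<theta>. y \<in> B" unfolding B_def by (rule supp_AE[OF sets])
  have Bm: "B \<in> sets borel" unfolding B_def using cpt by (simp add: compact_imp_closed)
  have "B \<noteq> {}" using AEB AE_False by auto
  then obtain c0 where c0: "c0 \<in> B" by auto
  have bdd: "bounded B" unfolding B_def using cpt by (rule compact_imp_bounded)
  have near: "\<bar>y $ i - c0 $ i\<bar> \<le> 1/3" if "y \<in> B" for y i
  proof -
    have "\<bar>y $ i - c0 $ i\<bar> = \<bar>(y - c0) $ i\<bar>" by simp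
    also have "\<dots> \<le> norm (y - c0)" by (rule component_le_norm_cart)
    also have "\<dots> = dist y c0" by (simp add: dist_norm)
    also have "\<dots> \<le> diameter B" by (rule diameter_bounded_bound[OF bdd that c0])
    finally show ?thesis using diam unfolding B_def by simp
  qed
  define Cb where "Cb = norm c0 + 1"
  have Cb: "\<bar>y $ i\<bar> \<le> Cb" if "y \<in> B" for y i
    using near[OF that, of i] component_le_norm_cart[of c0 i] unfolding Cb_def by linarith
  define l where "l = (\<lambda>j. c0 $ j - 1/3)"
  have AEj: "AE y in \<theta>. l j \<le> y $ j \<and> y $ j \<le> l j + 2/3" for j
  proof -
    have H: "l j \<le> y $ j \<and> y $ j \<le> l j + 2/3" if "y \<in> B" for y
      using near[OF that, of j] unfolding l_def abs_le_iff by linarith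
    show ?thesis using AEB by eventually_elim (use H in auto)
  qed
  define J where "J = (\<lambda>j. \<integral>s. psi \<theta> j s \<partial>lborel)"
  define Q where "Q = {x::real^'n. \<forall>i. 0 \<le> x $ i \<and> x $ i < 1}"
  have Qm[measurable]: "Q \<in> sets borel"
  proof -
    have "Q = (\<Inter>i. {x::real^'n. 0 \<le> x $ i \<and> x $ i < 1})" unfolding Q_def by auto
    also have "\<dots> \<in> sets borel" by (intro sets.finite_INT) auto
    finally show ?thesis .
  qed
  have Qfin: "emeasure lborel Q < \<infinity>"
  proof -
    have "Q \<subseteq> cbox 0 (\<chi> i. 1)" unfolding Q_def by (auto simp: mem_box_cart less_imp_le)
    then have "emeasure lborel Q \<le> emeasure lborel (cbox (0::real^'n) (\<chi> i. 1))"
      by (intro emeasure_mono) auto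
    then show ?thesis using emeasure_lborel_cbox_finite[of "0::real^'n" "\<chi> i. 1"] by simp
  qed
  have Jnn: "\<forall>j. 0 \<le> J j" unfolding J_def
    using psi_bounds[OF P] by (auto intro!: Bochner_Integration.integral_nonneg)
  show ?thesis
  proof (intro exI[of _ J] conjI[OF Jnn] allI impI)
    fix r :: "real^'n" assume r1: "\<forall>i. 1 \<le> r $ i"
    have rp: "\<And>i. 0 < r $ i" using r1 by (meson less_le_trans zero_less_one)
    have ex: "\<forall>j. \<exists>g. g \<in> borel_measurable borel \<and> (\<forall>t. \<bar>g t\<bar> \<le> 8) \<and>
       (\<forall>t\<in>{0..<1}. Ent \<theta> (\<lambda>y. \<lfloor>y $ j / r $ j + t\<rfloor>) = g t) \<and>
       (\<integral>t. indicator {0..<1} t * g t \<partial>lborel) = J j / r $ j"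
      unfolding J_def by (intro allI coord_integral[OF P sets AEj]) (use r1 in auto)
    from choice[OF ex] obtain g where g: "\<forall>j. g j \<in> borel_measurable borel \<and> (\<forall>t. \<bar>g j t\<bar> \<le> 8) \<and>
       (\<forall>t\<in>{0..<1}. Ent \<theta> (\<lambda>y. \<lfloor>y $ j / r $ j + t\<rfloor>) = g j t) \<and>
       (\<integral>t. indicator {0..<1} t * g j t \<partial>lborel) = J j / r $ j" by blast
    have gm: "\<And>j. g j \<in> borel_measurable borel" and gb: "\<And>j t. \<bar>g j t\<bar> \<le> 8"
      and geq: "\<And>j t. t \<in> {0..<1} \<Longrightarrow> Ent \<theta> (\<lambda>y. \<lfloor>y $ j / r $ j + t\<rfloor>) = g j t"
      and gint: "\<And>j. (\<integral>t. indicator {0..<1} t * g j t \<partial>lborel) = J j / r $ j"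
      using g by auto
    have gQ: "(LINT x:Q|lborel. g j (x $ j)) = J j / r $ j" for j
      unfolding Q_def using box_coord_integral[OF gm gb] gint by simp
    have gQint: "integrable lborel (\<lambda>x. indicator Q x * g j (x $ j))" for j
    proof (rule integrableI_bounded_set[where A=Q and B=8])
      show "(\<lambda>x. indicator Q x * g j (x $ j)) \<in> borel_measurable lborel"
        using gm[of j] by measurable
    qed (use Qfin gb in auto)
    define E where "E = (\<lambda>x. floor_entropy \<theta> r x)"
    have Ecoord: "g j (x $ j) \<le> E x" if "x \<in> Q" for j x
      using floor_pointwise(2)[OF P sets AEB Bm c0 Cb rp, of j x] geq[of "x $ j" j] that
      unfolding E_def floor_entropy_Ent Q_def by auto
    have Esum: "E x \<le> (\<Sum>j\<in>UNIV. g j (x $ j))" if "x \<in> Q" for x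
      using floor_pointwise(1)[OF P sets AEB Bm c0 Cb rp, of x] geq that
      unfolding E_def floor_entropy_Ent Q_def by auto
    have Enn: "0 \<le> E x" for x unfolding E_def floor_entropy_Ent by (rule Ent_nonneg[OF P])
    define S where "S = (\<lambda>i::'n. {\<lfloor>- Cb / r $ i\<rfloor> .. \<lfloor>Cb / r $ i + 1\<rfloor>})"
    define K where "K = {k::int^'n. \<forall>i. k $ i \<in> S i}"
    have Kfin: "finite K" unfolding K_def S_def by (rule finite_vec_set) simp
    define Zx where "Zx = (\<lambda>x y. \<chi> i. \<lfloor>y $ i / r $ i + x $ i\<rfloor>)"
    have ZK: "Zx x y \<in> K" if "x \<in> Q" "y \<in> B" for x y
    proof -
      have "\<lfloor>y $ i / r $ i + x $ i\<rfloor> \<in> S i" for i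
      proof -
        have a: "\<bar>y $ i / r $ i\<bar> \<le> Cb / r $ i" using Cb[OF that(2), of i] rp[of i]
          by (simp add: abs_div divide_right_mono)
        have x: "0 \<le> x $ i" "x $ i < 1" using that(1) unfolding Q_def by auto
        have "- Cb / r $ i \<le> y $ i / r $ i + x $ i" using a x unfolding abs_le_iff by simp
        moreover have "y $ i / r $ i + x $ i \<le> Cb / r $ i + 1" using a x unfolding abs_le_iff by simp
        ultimately have "\<lfloor>- Cb / r $ i\<rfloor> \<le> \<lfloor>y $ i / r $ i + x $ i\<rfloor> \<and> \<lfloor>y $ i / r $ i + x $ i\<rfloor> \<le> \<lfloor>Cb / r $ i + 1\<rfloor>"
          by (intro conjI floor_mono)
        then show ?thesis unfolding S_def by simp
      qed
      then show ?thesis unfolding K_def Zx_def by simp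
    qed
    define pk where "pk = (\<lambda>k x. measure \<theta> {y. Zx x y = k})"
    have Eeq: "E x = - (\<Sum>k\<in>K. pk k x * log 2 (pk k x))" if "x \<in> Q" for x
    proof -
      have "E x = Ent \<theta> (Zx x)" unfolding E_def Zx_def floor_entropy_Ent ..
      also have "\<dots> = - (\<Sum>k\<in>K. measure \<theta> {y. Zx x y = k} * log 2 (measure \<theta> {y. Zx x y = k}))"
      proof (rule Ent_finite[OF P _ Kfin])
        show "AE y in \<theta>. Zx x y \<in> K" using AEB by eventually_elim (use ZK that in auto)
        fix k show "{y. Zx x y = k} \<in> sets \<theta>" unfolding sets Zx_def
        proof -
          have "{y. (\<chi> i. \<lfloor>y $ i / r $ i + x $ i\<rfloor>) = k} = (\<Inter>i. {y. \<lfloor>y $ i / r $ i + x $ i\<rfloor> = k $ i})"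
            by (auto simp: vec_eq_iff)
          also have "\<dots> \<in> sets borel" by (intro sets.finite_INT) auto
          finally show "{y. (\<chi> i. \<lfloor>y $ i / r $ i + x $ i\<rfloor>) = k} \<in> sets borel" .
        qed
      qed
      finally show ?thesis unfolding pk_def .
    qed
    have pkm: "pk k \<in> borel_measurable lborel" for k
    proof -
      define Qk where "Qk = {p :: (real^'n) \<times> (real^'n). (\<forall>i. \<lfloor>snd p $ i / r $ i + fst p $ i\<rfloor> = k $ i)}"
      have "Qk = (\<Inter>i. {p :: (real^'n) \<times> (real^'n). \<lfloor>snd p $ i / r $ i + fst p $ i\<rfloor> = k $ i})"
        unfolding Qk_def by auto
      also have "\<dots> \<in> sets (lborel \<Otimes>\<^sub>M (borel :: (real^'n) measure))"
      proof (intro sets.finite_INT)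
        fix i
        have m1[measurable]: "(\<lambda>p::(real^'n) \<times> (real^'n). snd p $ i) \<in> borel_measurable (borel \<Otimes>\<^sub>M borel)"
          by (rule measurable_compose[OF measurable_snd borel_measurable_nth])
        have m2[measurable]: "(\<lambda>p::(real^'n) \<times> (real^'n). fst p $ i) \<in> borel_measurable (borel \<Otimes>\<^sub>M borel)"
          by (rule measurable_compose[OF measurable_fst borel_measurable_nth])
        have "Measurable.pred (borel \<Otimes>\<^sub>M (borel :: (real^'n) measure)) (\<lambda>p::(real^'n) \<times> (real^'n). \<lfloor>snd p $ i / r $ i + fst p $ i\<rfloor> = k $ i)"
          by measurable
        then have "Measurable.pred (lborel \<Otimes>\<^sub>M (borel :: (real^'n) measure)) (\<lambda>p::(real^'n) \<times> (real^'n). \<lfloor>snd p $ i / r $ i + fst p $ i\<rfloor> = k $ i)"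
          by (subst measurable_cong_sets[OF sets_pair_measure_cong[OF sets_lborel refl] refl])
        then show "{p :: (real^'n) \<times> (real^'n). \<lfloor>snd p $ i / r $ i + fst p $ i\<rfloor> = k $ i} \<in> sets (lborel \<Otimes>\<^sub>M (borel :: (real^'n) measure))"
          by (simp add: pred_def space_pair_measure)
      qed auto
      finally have X: "Qk \<in> sets (lborel \<Otimes>\<^sub>M (borel :: (real^'n) measure))" .
      have "Qk \<in> sets (lborel \<Otimes>\<^sub>M \<theta>)" 
        using X sets_pair_measure_cong[OF refl sets, of lborel] by (metis)
      then have "(\<lambda>x. emeasure \<theta> (Pair x -` Qk)) \<in> borel_measurable lborel"
        by (rule measurable_emeasure_Pair)
      then have "(\<lambda>x. enn2real (emeasure \<theta> (Pair x -` Qk))) \<in> borel_measurable lborel" by measurable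
      moreover have "Pair x -` Qk = {y. Zx x y = k}" for x unfolding Qk_def Zx_def by (auto simp: vec_eq_iff)
      ultimately show ?thesis unfolding pk_def measure_def by simp
    qed
    have EQm: "(\<lambda>x. indicator Q x * E x) \<in> borel_measurable lborel"
    proof -
      have "(\<lambda>x. indicator Q x * (- (\<Sum>k\<in>K. pk k x * log 2 (pk k x)))) \<in> borel_measurable lborel"
        using pkm by measurable
      moreover have "indicator Q x * E x = indicator Q x * (- (\<Sum>k\<in>K. pk k x * log 2 (pk k x)))" for x
        using Eeq[of x] by (cases "x \<in> Q") auto
      ultimately show ?thesis by simp
    qed
    have EQint: "integrable lborel (\<lambda>x. indicator Q x * E x)"
    proof (rule integrableI_bounded_set[where A=Q and B="8 * real CARD('n)"])
      show "AE x in lborel. x \<in> Q \<longrightarrow> norm (indicator Q x * E x) \<le> 8 * real CARD('n)"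
      proof (intro AE_I2 impI)
        fix x assume x: "x \<in> Q"
        have "E x \<le> (\<Sum>j\<in>UNIV. g j (x $ j))" by (rule Esum[OF x])
        also have "\<dots> \<le> (\<Sum>j\<in>(UNIV::'n set). 8)" using gb by (intro sum_mono) (simp add: abs_le_iff)
        finally show "norm (indicator Q x * E x) \<le> 8 * real CARD('n)" using Enn[of x] x by simp
      qed
    qed (use Qfin EQm in auto)
    have avg: "avg_entropy \<theta> r = (\<integral>x. indicator Q x * E x \<partial>lborel)"
      unfolding avg_entropy_def set_lebesgue_integral_def Q_def E_def by simp
    have gQ': "(\<integral>x. indicator Q x * g j (x $ j) \<partial>lborel) = J j / r $ j" for j
      using gQ[of j] unfolding set_lebesgue_integral_def by simp
    have up: "avg_entropy \<theta> r \<le> (\<Sum>j\<in>UNIV. J j / r $ j)"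
    proof -
      have "(\<integral>x. indicator Q x * E x \<partial>lborel) \<le> (\<integral>x. (\<Sum>j\<in>UNIV. indicator Q x * g j (x $ j)) \<partial>lborel)"
      proof (rule integral_mono[OF EQint])
        show "integrable lborel (\<lambda>x. \<Sum>j\<in>UNIV. indicator Q x * g j (x $ j))"
          by (rule Bochner_Integration.integrable_sum) (rule gQint)
        fix x show "indicator Q x * E x \<le> (\<Sum>j\<in>UNIV. indicator Q x * g j (x $ j))"
          using Esum[of x] by (cases "x \<in> Q") (auto simp: sum_distrib_left[symmetric])
      qed
      also have "\<dots> = (\<Sum>j\<in>UNIV. J j / r $ j)"
        by (subst Bochner_Integration.integral_sum) (use gQint gQ' in auto)
      finally show ?thesis using avg by simp
    qed
    have lo: "J j / r $ j \<le> avg_entropy \<theta> r" for j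
    proof -
      have "(\<integral>x. indicator Q x * g j (x $ j) \<partial>lborel) \<le> (\<integral>x. indicator Q x * E x \<partial>lborel)"
      proof (rule integral_mono[OF gQint EQint])
        fix x show "indicator Q x * g j (x $ j) \<le> indicator Q x * E x"
          using Ecoord[of x j] by (cases "x \<in> Q") auto
      qed
      then show ?thesis using avg gQ' by simp
    qed
    show "avg_entropy \<theta> r \<le> (\<Sum>j\<in>UNIV. J j / r $ j) \<and> (\<forall>j. J j / r $ j \<le> avg_entropy \<theta> r)"
      using up lo by auto
  qed
qed




lemma avg_nonneg:
  assumes "prob_space \<theta>" shows "0 \<le> avg_entropy \<theta> r"
  unfolding avg_entropy_def set_lebesgue_integral_def
  by (intro Bochner_Integration.integral_nonneg) (simp add: floor_entropy_Ent Ent_nonneg[OF assms])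

lemma ratio_arith:
  fixes x y z A e d :: real
  assumes A: "0 < A" and e: "0 < e" "6 * d * e \<le> 1" and d: "1 \<le> d"
    and x: "A \<le> x" and y: "A * e \<le> y" "y \<le> 2 * (A * e)"
    and z: "A * e^2 \<le> z" "z \<le> 2 * (A * e^2)"
  shows "1 \<le> y / z" "1 \<le> x / z" "3 * d * y \<le> x" "0 < y" "0 < z"
proof -
  have "6 * 1 * e \<le> 6 * d * e" using e d by (intro mult_right_mono) auto
  then have e6: "2 * e \<le> 1" using e(2) by linarith
  have Ae: "0 < A * e" using A e by simp
  have zp: "0 < z" using z(1) A e by (smt (verit) mult_pos_pos zero_less_power)
  have yp: "0 < y" using y(1) Ae by simp
  have "(A * e) * (2 * e) \<le> (A * e) * 1" using Ae e6 by (intro mult_left_mono) auto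
  then have "2 * (A * e^2) \<le> A * e" by (simp add: power2_eq_square algebra_simps)
  then show "1 \<le> y / z" using y z zp by simp
  have ee: "e * e \<le> e * 1" using e e6 by (intro mult_left_mono) auto
  have "A * (2 * e^2) \<le> A * 1" using A e6 ee by (intro mult_left_mono) (auto simp: power2_eq_square)
  then have "2 * (A * e^2) \<le> A" by simp
  then show "1 \<le> x / z" using x z zp by simp
  have "3 * d * y \<le> 3 * d * (2 * (A * e))" using y d by (intro mult_left_mono) auto
  also have "\<dots> = A * (6 * d * e)" by simp
  also have "\<dots> \<le> A" using A e by (simp add: mult_left_le)
  finally show "3 * d * y \<le> x" using x by simp
  show "0 < y" "0 < z" using yp zp by auto
qed


theorem lemma3p2:
  fixes lam :: "real^('n::{finite,linorder})"
  assumes "\<forall>i. 0 < lam $ i \<and> lam $ i < 1"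
    and "\<forall>i j. i < j \<longrightarrow> lam $ j < lam $ i"
  shows "\<exists>N0::nat. N0 \<ge> 1 \<and>
    (\<forall>N \<ge> N0. \<forall>\<theta> \<in> cs_prob_measures. diameter (supp \<theta>) \<le> 1/3 \<longrightarrow>
      (\<forall>n \<ge> N.
        cond_avg_entropy \<theta> (vdiv (s_seq lam (n+N)) (s_seq lam (n+2*N)))
                             (vdiv (s_seq lam n) (s_seq lam (n+2*N)))
        \<ge> 2 * cond_avg_entropy \<theta> (vdiv (s_seq lam n) (s_seq lam (n+2*N)))
                                  (vdiv (s_seq lam (n-N)) (s_seq lam (n+2*N)))))"
proof -
  have lam: "\<And>i. 0 < lam $ i" "\<And>i. lam $ i < 1" using assms(1) by auto
  define d where "d = real CARD('n)"
  have d1: "1 \<le> d" unfolding d_def by simp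
  define q where "q = Max (range (\<lambda>i. lam $ i))"
  have lq: "\<And>i. lam $ i \<le> q" unfolding q_def by (intro Max_ge) auto
  have q1: "q < 1" unfolding q_def using lam(2) by (subst Max_less_iff) auto
  have q0: "0 < q" using lq[of undefined] lam(1)[of undefined] by linarith
  obtain N1 where N1: "q ^ N1 < 1 / (6 * d)" using real_arch_pow_inv[OF _ q1, of "1/(6*d)"] d1 by auto
  show ?thesis
  proof (intro exI[of _ "max N1 1"] conjI allI impI ballI)
    show "1 \<le> max N1 1" by simp
    fix N :: nat and \<theta> :: "(real^('n::{finite,linorder})) measure" and n :: nat
    assume N: "max N1 1 \<le> N" and th: "\<theta> \<in> cs_prob_measures" and diam: "diameter (supp \<theta>) \<le> 1/3"
      and n: "N \<le> n"
    have P: "prob_space \<theta>" using th unfolding cs_prob_measures_def by auto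
    obtain J where Jnn: "\<And>j. 0 \<le> J j" and JB: "\<And>r. (\<forall>i. 1 \<le> r $ i) \<Longrightarrow>
       avg_entropy \<theta> r \<le> (\<Sum>j\<in>UNIV. J j / r $ j) \<and> (\<forall>j. J j / r $ j \<le> avg_entropy \<theta> r)"
      using avg_bounds[OF th diam] by blast
    define R1 where "R1 = vdiv (s_seq lam (n+N)) (s_seq lam (n+2*N))"
    define R0 where "R0 = vdiv (s_seq lam n) (s_seq lam (n+2*N))"
    define Rm where "Rm = vdiv (s_seq lam (n-N)) (s_seq lam (n+2*N))"
    have per: "1 \<le> R1 $ j \<and> 1 \<le> R0 $ j \<and> 3 * d * (J j / R0 $ j) \<le> J j / R1 $ j" for j
    proof -
      define L where "L = lam $ j"
      have L: "0 < L" "L < 1" unfolding L_def using lam by auto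
      define A where "A = L ^ n"
      define e where "e = L ^ N"
      have A: "0 < A" unfolding A_def using L by simp
      have e: "0 < e" unfolding e_def using L by simp
      have "e \<le> q ^ N" unfolding e_def L_def using lam(1) lq by (intro power_mono) (auto intro: less_imp_le)
      also have "\<dots> \<le> q ^ N1" using q0 q1 N by (intro power_decreasing) auto
      also have "\<dots> \<le> 1 / (6 * d)" using N1 by simp
      finally have "e * (6 * d) \<le> 1" using d1 by (simp add: field_simps)
      then have e6: "6 * d * e \<le> 1" by (simp add: algebra_simps)
      define x where "x = s_seq lam n $ j"
      define y where "y = s_seq lam (n+N) $ j"
      define z where "z = s_seq lam (n+2*N) $ j"
      have sx: "A \<le> x" using s_bounds[OF lam(1) lam(2), of j n] unfolding x_def A_def L_def by simp
      have "L ^ (n+N) = A * e" unfolding A_def e_def by (simp add: power_add)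
      then have sy: "A * e \<le> y" "y \<le> 2 * (A * e)" using s_bounds[OF lam(1) lam(2), of j "n+N"] unfolding y_def L_def by auto
      have "L ^ (n+2*N) = A * e^2" unfolding A_def e_def by (simp add: power_add power_mult[symmetric] mult.commute)
      then have sz: "A * e^2 \<le> z" "z \<le> 2 * (A * e^2)" using s_bounds[OF lam(1) lam(2), of j "n+2*N"] unfolding z_def L_def by auto
      note RA = ratio_arith[OF A e e6 d1 sx sy sz]
      have R1: "R1 $ j = y / z" unfolding R1_def vdiv_def y_def z_def by simp
      have R0: "R0 $ j = x / z" unfolding R0_def vdiv_def x_def z_def by simp
      have xp: "0 < x" using A sx by simp
      have "3 * d * (J j / (x / z)) = (3 * d * J j * z) / x" by simp
      also have "\<dots> \<le> (3 * d * J j * z) / (3 * d * y)"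
        using RA Jnn[of j] d1 xp by (intro divide_left_mono) auto
      also have "\<dots> = J j / (y / z)" using d1 by simp
      finally show ?thesis unfolding R1 R0 using RA by simp
    qed
    have B1: "\<forall>j. J j / R1 $ j \<le> avg_entropy \<theta> R1" using JB[of R1] per by auto
    have B0: "avg_entropy \<theta> R0 \<le> (\<Sum>j\<in>UNIV. J j / R0 $ j)" using JB[of R0] per by auto
    have "3 * d * (\<Sum>j\<in>UNIV. J j / R0 $ j) = (\<Sum>j\<in>UNIV. 3 * d * (J j / R0 $ j))"
      by (simp add: sum_distrib_left)
    also have "\<dots> \<le> (\<Sum>j\<in>UNIV. J j / R1 $ j)" using per by (intro sum_mono) auto
    also have "\<dots> \<le> (\<Sum>j\<in>(UNIV::'n set). avg_entropy \<theta> R1)" using B1 by (intro sum_mono) auto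
    also have "\<dots> = d * avg_entropy \<theta> R1" unfolding d_def by simp
    finally have "d * (3 * (\<Sum>j\<in>UNIV. J j / R0 $ j)) \<le> d * avg_entropy \<theta> R1" by (simp add: algebra_simps)
    then have F1: "3 * (\<Sum>j\<in>UNIV. J j / R0 $ j) \<le> avg_entropy \<theta> R1" using d1 by simp
    have Fm: "0 \<le> avg_entropy \<theta> Rm" by (rule avg_nonneg[OF P])
    have "2 * (avg_entropy \<theta> R0 - avg_entropy \<theta> Rm) \<le> avg_entropy \<theta> R1 - avg_entropy \<theta> R0"
    proof -
      define S where "S = (\<Sum>j\<in>UNIV. J j / R0 $ j)"
      have a: "3 * S \<le> avg_entropy \<theta> R1" using F1 unfolding S_def .
      have b: "avg_entropy \<theta> R0 \<le> S" using B0 unfolding S_def .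
      have c: "3 * avg_entropy \<theta> R0 \<le> avg_entropy \<theta> R1" using a b by linarith
      show ?thesis using c Fm by (simp add: algebra_simps)
    qed
    then show "2 * cond_avg_entropy \<theta> (vdiv (s_seq lam n) (s_seq lam (n+2*N)))
                                  (vdiv (s_seq lam (n-N)) (s_seq lam (n+2*N)))
        \<le> cond_avg_entropy \<theta> (vdiv (s_seq lam (n+N)) (s_seq lam (n+2*N)))
                             (vdiv (s_seq lam n) (s_seq lam (n+2*N)))"
      unfolding cond_avg_entropy_def R1_def R0_def Rm_def by simp
  qed
qed


end
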